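(* Let $\Gamma,T,\ast$ and $W$ be as in the context, and let $c$ be a cell of $\mathcal{UD}^n\Gamma$. Then: (1) $c$ is critical if and only if $c$ contains no order-respecting edge and all vertices of $c$ are blocked; (2) $c$ is redundant if and only if either (a) $c$ contains no order-respecting edge and at least one vertex of $c$ is unblocked, or (b) $c$ contains an order-respecting edge, and, with $e$ the minimal order-respecting edge of $c$, there is an unblocked vertex $v\in c$ with $v<\iota(e)$; (3) $c$ is collapsible if and only if $c$ contains an order-respecting edge and, with $e$ the minimal order-respecting edge of $c$, every vertex $v\in c$ with $v<\iota(e)$ is blocked.
   Context: $\Gamma$ is a finite connected graph and $n\ge1$; $d(v)$ is the degree of $v$, and $v$ is essential if $d(v)\ge3$. $\mathcal{UD}^n\Gamma$ is the cell complex whose cells are unordered $n$-element sets $c=\{c_1,\dots,c_n\}$ where each $c_i$ is a vertex or an edge of $\Gamma$ and the closed sets $c_i$ are pairwise disjoint (it is the quotient by the coordinate-permuting $S_n$-action of the subcomplex of $\Gamma^n$ formed by the product cells whose closures avoid the diagonal); the dimension of $c$ is the number of edges in it, and faces are obtained by replacing edges by endpoints. Fix a maximal tree $T$ of $\Gamma$ (edges not in $T$ are deleted edges) and a vertex $\ast$ of degree $1$ in $T$. For vertices $v_1,v_2$, $v_1\wedge v_2$ is the endpoint other than $\ast$ of $[\ast,v_1]\cap[\ast,v_2]$ (geodesics in $T$), or $\ast$ if this is $\{\ast\}$. Directions (edges) at each vertex $v$ are labelled $0,\dots,d(v)-1$, label $0$ for the edge of $T$ towards $\ast$ (the direction from $\ast$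 in $T$ gets label $1$); $g(v_1,v_2)$ is the label of the direction from $v_1$ on the $T$-geodesic to $v_2$, and $g(v,v)=0$. Order: $v_1\le v_2$ iff, with $v_3=v_1\wedge v_2$, $v_3=v_1$ or ($v_3\ne v_1$ and $g(v_3,v_1)<g(v_3,v_2)$); this is a linear order. For an edge $e$, $\iota(e)\ge\tau(e)$ are its endpoints; for $v\ne\ast$, $e(v)$ is the edge of $T$ at $v$ in direction $0$. Blocking and $W$: a vertex $v\neq\ast$ of a cell $c$ is unblocked in $c$ if $e(v)$ is disjoint from every element of $c$ other than $v$; then the elementary reduction of $c$ from $v$ is the cell obtained by replacing $v$ by $e(v)$. Otherwise (and always for $v=\ast$) $v$ is blocked. The principal reduction of $c$ is the elementary reduction from the smallest unblocked vertex of $c$ (if there is one). Define $W$: for a $0$-cell $c$, $W_0(c)$ is its principal reduction if it exists; for $i>0$ and an $i$-cell $c$, $W_i(c)$ is its principal reduction if this exists and $c\notin\mathrm{im}W_{i-1}$; otherwise undefined. A cell is redundant if it is in the domain of $W$, collapsible if it is in the image of $W$, and critical otherwise. An edge $e$ of a cell $c$ is order-respecting in $c$ if $e\subseteq T$ and for every vertex $v\in c$ with $v\neq\ast$, $e(v)\cap e=\{\tau(e)\}$ implies $v>\iota(e)$. If $c$ has order-respecting edges, the minimal one is the one with smallest $\iota(e)$. *)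

theory Defs
  imports Main
begin

text \<open>A finite (multi)graph Gamma with vertex set Vs, edge set Es and endpoint map ends
  (loops: one endpoint; ordinary edges: two), a maximal tree Tr, a base vertex base (the
  vertex called star) and a labelling lab v e of the directions at v given by the edges e of Tr
  (the labels of non-tree directions never enter the definitions below).\<close>

record ('v,'e) gsetup =
  Vs   :: "'v set"
  Es   :: "'e set"
  ends :: "'e \<Rightarrow> 'v set"
  Tr   :: "'e set"
  base :: 'v
  lab  :: "'v \<Rightarrow> 'e \<Rightarrow> nat"

definition adjrel :: "('v,'e) gsetup \<Rightarrow> 'e set \<Rightarrow> ('v \<times> 'v) set" where
  "adjrel G F = {(u,w). \<exists>e\<in>F. ends G e = {u,w}}"

definition deg :: "('v,'e) gsetup \<Rightarrow> 'v \<Rightarrow> nat" where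
  "deg G v = card {e\<in>Es G. v \<in> ends G e} + card {e\<in>Es G. ends G e = {v}}"

definition geo :: "('v,'e) gsetup \<Rightarrow> 'v \<Rightarrow> 'v \<Rightarrow> 'v list" where
  "geo G a b = (THE p. p \<noteq> [] \<and> hd p = a \<and> last p = b \<and> distinct p \<and>
      (\<forall>i. Suc i < length p \<longrightarrow> (p!i, p!Suc i) \<in> adjrel G (Tr G)))"

definition tedge :: "('v,'e) gsetup \<Rightarrow> 'v \<Rightarrow> 'v \<Rightarrow> 'e" where
  "tedge G u w = (THE e. e \<in> Tr G \<and> ends G e = {u,w})"

definition eT :: "('v,'e) gsetup \<Rightarrow> 'v \<Rightarrow> 'e" where
  "eT G v = tedge G v (geo G v (base G) ! 1)"

definition gdir :: "('v,'e) gsetup \<Rightarrow> 'v \<Rightarrow> 'v \<Rightarrow> nat" where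
  "gdir G a b = (if a = b then 0 else lab G a (tedge G a (geo G a b ! 1)))"

definition meet :: "('v,'e) gsetup \<Rightarrow> 'v \<Rightarrow> 'v \<Rightarrow> 'v" where
  "meet G a b = (THE x. x \<in> Vs G \<and>
      set (geo G (base G) x) = set (geo G (base G) a) \<inter> set (geo G (base G) b))"

definition vle :: "('v,'e) gsetup \<Rightarrow> 'v \<Rightarrow> 'v \<Rightarrow> bool" where
  "vle G a b \<longleftrightarrow> (let c = meet G a b in c = a \<or> (c \<noteq> a \<and> gdir G c a < gdir G c b))"

definition vlt :: "('v,'e) gsetup \<Rightarrow> 'v \<Rightarrow> 'v \<Rightarrow> bool" where
  "vlt G a b \<longleftrightarrow> vle G a b \<and> a \<noteq> b"

definition iota :: "('v,'e) gsetup \<Rightarrow> 'e \<Rightarrow> 'v" where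
  "iota G e = (THE x. x \<in> ends G e \<and> (\<forall>y\<in>ends G e. vle G y x))"

definition tau :: "('v,'e) gsetup \<Rightarrow> 'e \<Rightarrow> 'v" where
  "tau G e = (THE x. x \<in> ends G e \<and> (\<forall>y\<in>ends G e. vle G x y))"

definition UD_setup :: "('v,'e) gsetup \<Rightarrow> bool" where
  "UD_setup G \<longleftrightarrow>
     finite (Vs G) \<and> finite (Es G) \<and>
     (\<forall>e\<in>Es G. ends G e \<subseteq> Vs G \<and> ends G e \<noteq> {} \<and> card (ends G e) \<le> 2) \<and>
     (\<forall>a\<in>Vs G. \<forall>b\<in>Vs G. (a,b) \<in> (adjrel G (Es G))\<^sup>*) \<and>
     Tr G \<subseteq> Es G \<and>
     (\<forall>a\<in>Vs G. \<forall>b\<in>Vs G. (a,b) \<in> (adjrel G (Tr G))\<^sup>*) \<and>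
     (\<forall>e\<in>Tr G. \<exists>a b. ends G e = {a,b} \<and> (a,b) \<notin> (adjrel G (Tr G - {e}))\<^sup>*) \<and>
     base G \<in> Vs G \<and> card {e\<in>Tr G. base G \<in> ends G e} = 1 \<and>
     (\<forall>v\<in>Vs G. inj_on (lab G v) {e\<in>Tr G. v \<in> ends G e}) \<and>
     (\<forall>v\<in>Vs G. v \<noteq> base G \<longrightarrow> lab G v (eT G v) = 0 \<and>
          (\<forall>e\<in>Tr G. v \<in> ends G e \<longrightarrow> lab G v e < deg G v)) \<and>
     (\<forall>e\<in>Tr G. base G \<in> ends G e \<longrightarrow> lab G (base G) e = 1)"

text \<open>Elements of cells: Inl v (vertex) or Inr e (edge); clo gives the closed set.\<close>
definition clo :: "('v,'e) gsetup \<Rightarrow> 'v + 'e \<Rightarrow> ('v + 'e) set" where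
  "clo G x = (case x of Inl v \<Rightarrow> {Inl v} | Inr e \<Rightarrow> insert (Inr e) (Inl ` ends G e))"

definition is_cell :: "('v,'e) gsetup \<Rightarrow> nat \<Rightarrow> ('v + 'e) set \<Rightarrow> bool" where
  "is_cell G n c \<longleftrightarrow> finite c \<and> card c = n \<and> c \<subseteq> Inl ` Vs G \<union> Inr ` Es G \<and>
     (\<forall>x\<in>c. \<forall>y\<in>c. x \<noteq> y \<longrightarrow> clo G x \<inter> clo G y = {})"

definition cdim :: "('v + 'e) set \<Rightarrow> nat" where
  "cdim c = card {e. Inr e \<in> c}"

definition unblocked :: "('v,'e) gsetup \<Rightarrow> ('v + 'e) set \<Rightarrow> 'v \<Rightarrow> bool" where
  "unblocked G c v \<longleftrightarrow> Inl v \<in> c \<and> v \<noteq> base G \<and>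
     (\<forall>x\<in>c. x \<noteq> Inl v \<longrightarrow> clo G (Inr (eT G v)) \<inter> clo G x = {})"

definition blocked :: "('v,'e) gsetup \<Rightarrow> ('v + 'e) set \<Rightarrow> 'v \<Rightarrow> bool" where
  "blocked G c v \<longleftrightarrow> Inl v \<in> c \<and> \<not> unblocked G c v"

definition elred :: "('v,'e) gsetup \<Rightarrow> ('v + 'e) set \<Rightarrow> 'v \<Rightarrow> ('v + 'e) set" where
  "elred G c v = insert (Inr (eT G v)) (c - {Inl v})"

definition principal :: "('v,'e) gsetup \<Rightarrow> ('v + 'e) set \<Rightarrow> ('v + 'e) set option" where
  "principal G c = (if \<exists>v. unblocked G c v
     then Some (elred G c (THE v. unblocked G c v \<and> (\<forall>w. unblocked G c w \<longrightarrow> vle G v w)))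
     else None)"

text \<open>Wdom G n i = domain of W_i on the cells of UD^n Gamma; W_i(c) = the (principal G c).\<close>
primrec Wdom :: "('v,'e) gsetup \<Rightarrow> nat \<Rightarrow> nat \<Rightarrow> ('v + 'e) set set" where
  "Wdom G n 0 = {c. is_cell G n c \<and> cdim c = 0 \<and> principal G c \<noteq> None}"
| "Wdom G n (Suc i) = {c. is_cell G n c \<and> cdim c = Suc i \<and> principal G c \<noteq> None \<and>
      c \<notin> (\<lambda>d. the (principal G d)) ` Wdom G n i}"

definition redundant :: "('v,'e) gsetup \<Rightarrow> nat \<Rightarrow> ('v + 'e) set \<Rightarrow> bool" where
  "redundant G n c \<longleftrightarrow> (\<exists>i. c \<in> Wdom G n i)"

definition collapsible :: "('v,'e) gsetup \<Rightarrow> nat \<Rightarrow> ('v + 'e) set \<Rightarrow> bool" where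
  "collapsible G n c \<longleftrightarrow> (\<exists>i. c \<in> (\<lambda>d. the (principal G d)) ` Wdom G n i)"

definition critical :: "('v,'e) gsetup \<Rightarrow> nat \<Rightarrow> ('v + 'e) set \<Rightarrow> bool" where
  "critical G n c \<longleftrightarrow> is_cell G n c \<and> \<not> redundant G n c \<and> \<not> collapsible G n c"

definition order_resp :: "('v,'e) gsetup \<Rightarrow> ('v + 'e) set \<Rightarrow> 'e \<Rightarrow> bool" where
  "order_resp G c e \<longleftrightarrow> Inr e \<in> c \<and> e \<in> Tr G \<and>
     (\<forall>v. Inl v \<in> c \<and> v \<noteq> base G \<and>
        clo G (Inr (eT G v)) \<inter> clo G (Inr e) = {Inl (tau G e)} \<longrightarrow> vlt G (iota G e) v)"

definition min_order_resp :: "('v,'e) gsetup \<Rightarrow> ('v + 'e) set \<Rightarrow> 'e" where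
  "min_order_resp G c = (THE e. order_resp G c e \<and>
      (\<forall>e'. order_resp G c e' \<longrightarrow> vle G (iota G e) (iota G e')))"

end

theory Submission
  imports Defs "HOL-Library.Sublist" "HOL-Library.List_Lexorder"
begin


lemma walk_rtrancl:
  "successively (\<lambda>u w. (u,w) \<in> S) p \<Longrightarrow> p \<noteq> [] \<Longrightarrow> (hd p, last p) \<in> S\<^sup>*"
proof (induction p)
  case Nil then show ?case by simp
next
  case (Cons a p)
  show ?case
  proof (cases p)
    case Nil then show ?thesis by simp
  next
    case (Cons b q)
    with Cons.prems have "(a,b) \<in> S" "successively (\<lambda>u w. (u,w) \<in> S) p" by auto
    with Cons.IH \<open>p = b # q\<close> have "(b, last p) \<in> S\<^sup>*" by simp
    with \<open>(a,b) \<in> S\<close> \<open>p = b # q\<close> show ?thesis by simp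
  qed
qed

lemma distinct_hd_last: "distinct q \<Longrightarrow> q \<noteq> [] \<Longrightarrow> hd q = last q \<Longrightarrow> q = [hd q]"
  by (cases q) (auto split: if_splits)

lemma adjrel_sym: "(u,w) \<in> adjrel G F \<Longrightarrow> (w,u) \<in> adjrel G F"
  unfolding adjrel_def by (auto simp: insert_commute)

lemma sym_adjrel: "sym (adjrel G F)"
  by (rule symI) (rule adjrel_sym)

locale UDS =
  fixes G :: "('v,'e) gsetup"
  assumes S: "UD_setup G"
begin

abbreviation "R \<equiv> adjrel G (Tr G)"

lemma Sc1: "finite (Vs G)"
  using S unfolding UD_setup_def by (elim conjE) assumption
lemma Sc2: "Tr G \<subseteq> Es G"
  using S unfolding UD_setup_def by (elim conjE) assumption
lemma Sc3: "\<forall>e\<in>Es G. ends G e \<subseteq> Vs G \<and> ends G e \<noteq> {} \<and> card (ends G e) \<le> 2"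
  using S unfolding UD_setup_def by (elim conjE) assumption
lemma Sc4: "base G \<in> Vs G"
  using S unfolding UD_setup_def by (elim conjE) assumption
lemma Sc5: "\<forall>a\<in>Vs G. \<forall>b\<in>Vs G. (a,b) \<in> (adjrel G (Tr G))\<^sup>*"
  using S unfolding UD_setup_def by (elim conjE) assumption
lemma Sc6: "\<forall>e\<in>Tr G. \<exists>a b. ends G e = {a,b} \<and> (a,b) \<notin> (adjrel G (Tr G - {e}))\<^sup>*"
  using S unfolding UD_setup_def by (elim conjE) assumption
lemma Sc7: "\<forall>v\<in>Vs G. inj_on (lab G v) {e\<in>Tr G. v \<in> ends G e}"
  using S unfolding UD_setup_def by (elim conjE) assumption
lemmas Sc = Sc1 Sc2 Sc3 Sc4 Sc5 Sc6 Sc7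

lemma finVs: "finite (Vs G)" by (rule Sc(1))
lemma TrEs: "Tr G \<subseteq> Es G" by (rule Sc(2))
lemma ends_Vs: "e \<in> Es G \<Longrightarrow> ends G e \<subseteq> Vs G" using Sc(3) by blast
lemma base_Vs: "base G \<in> Vs G" by (rule Sc(4))
lemma conn: "a \<in> Vs G \<Longrightarrow> b \<in> Vs G \<Longrightarrow> (a,b) \<in> R\<^sup>*" using Sc(5) by blast
lemma acyc: "e \<in> Tr G \<Longrightarrow> \<exists>a b. ends G e = {a,b} \<and> (a,b) \<notin> (adjrel G (Tr G - {e}))\<^sup>*"
  using Sc(6) by blast
lemma lab_inj: "v \<in> Vs G \<Longrightarrow> inj_on (lab G v) {e\<in>Tr G. v \<in> ends G e}"
  using Sc(7) by blast

lemma acyc2: assumes "e \<in> Tr G" "ends G e = {a,b}"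
  shows "(a,b) \<notin> (adjrel G (Tr G - {e}))\<^sup>*"
proof
  assume "(a,b) \<in> (adjrel G (Tr G - {e}))\<^sup>*"
  moreover have "sym ((adjrel G (Tr G - {e}))\<^sup>*)" using sym_adjrel sym_rtrancl by blast
  ultimately have "(b,a) \<in> (adjrel G (Tr G - {e}))\<^sup>*" unfolding sym_def by blast
  with \<open>(a,b) \<in> _\<close> acyc[OF assms(1)] assms(2) show False
    by (metis doubleton_eq_iff)
qed

lemma tr_uniq: assumes "e1 \<in> Tr G" "e2 \<in> Tr G" "ends G e1 = ends G e2" shows "e1 = e2"
proof (rule ccontr)
  assume "e1 \<noteq> e2"
  obtain a b where ab: "ends G e1 = {a,b}" using acyc[OF assms(1)] by blast
  have "(a,b) \<in> adjrel G (Tr G - {e1})" unfolding adjrel_def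
    using assms \<open>e1 \<noteq> e2\<close> ab by auto
  with acyc2[OF assms(1) ab] show False by blast
qed

lemma R_irrefl: "(a,a) \<notin> R"
proof
  assume "(a,a) \<in> R"
  then obtain e where "e \<in> Tr G" "ends G e = {a,a}" unfolding adjrel_def by blast
  with acyc2[of e a a] show False by simp
qed

lemma R_Vs: "(a,b) \<in> R \<Longrightarrow> a \<in> Vs G \<and> b \<in> Vs G"
  unfolding adjrel_def using TrEs ends_Vs by blast

lemma tedge: assumes "e \<in> Tr G" "ends G e = {u,w}" shows "tedge G u w = e"
  unfolding tedge_def using assms tr_uniq by (intro the_equality) auto

lemma tedgeR: assumes "(u,w) \<in> R" shows "tedge G u w \<in> Tr G \<and> ends G (tedge G u w) = {u,w}"
proof -
  obtain e where "e \<in> Tr G" "ends G e = {u,w}" using assms unfolding adjrel_def by blast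
  then show ?thesis using tedge by auto
qed

definition tpath :: "'v list \<Rightarrow> bool" where
  "tpath p \<longleftrightarrow> p \<noteq> [] \<and> distinct p \<and> successively (\<lambda>u w. (u,w) \<in> R) p"

lemma tpath_uniq:
  "tpath p \<Longrightarrow> tpath q \<Longrightarrow> hd p = hd q \<Longrightarrow> last p = last q \<Longrightarrow> p = q"
proof (induction p arbitrary: q)
  case Nil then show ?case by (simp add: tpath_def)
next
  case (Cons a p)
  show ?case
  proof (cases p)
    case Nil
    then have "hd q = last q" using Cons.prems by simp
    then have "q = [hd q]" using distinct_hd_last Cons.prems(2) unfolding tpath_def by blast
    then show ?thesis using Cons.prems Nil by (metis list.sel(1))
  next
    case (Cons x p')
    note pc = this
    obtain y q' where q: "q = a # y # q'"
    proof (cases q)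
      case Nil then show ?thesis using Cons.prems by (simp add: tpath_def)
    next
      case (Cons a' q1)
      then have a': "a' = a" using Cons.prems by simp
      show ?thesis
      proof (cases q1)
        case Nil
        then have "last (a # p) = a" using Cons.prems Cons a' by simp
        moreover have "distinct (a # p)" "a # p \<noteq> [a]" using Cons.prems pc unfolding tpath_def by auto
        ultimately show ?thesis
          by (metis distinct_hd_last list.sel(1) list.simps(3))
      next
        case (Cons y q')
        then show ?thesis using that \<open>q = a' # q1\<close> a' by blast
      qed
    qed
    have tp: "tpath (x # p')" "tpath (y # q')"
      using Cons.prems pc q unfolding tpath_def by auto
    have lasts: "last (x # p') = last (y # q')" using Cons.prems pc q by simp
    show ?thesis
    proof (cases "x = y")
      case True
      then show ?thesis using Cons.IH[OF _ tp(2)] tp(1) lasts pc q by simp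
    next
      case False
      have ax: "(a,x) \<in> R" "(a,y) \<in> R" using Cons.prems pc q unfolding tpath_def by auto
      then obtain e where e: "e \<in> Tr G" "ends G e = {a,x}" unfolding adjrel_def by blast
      let ?S = "adjrel G (Tr G - {e})"
      have step: "(u,w) \<in> ?S" if h: "(u,w) \<in> R" "a \<notin> {u,w}" for u w
      proof -
        obtain e' where "e' \<in> Tr G" "ends G e' = {u,w}" using h unfolding adjrel_def by blast
        moreover have "e' \<noteq> e" using h e calculation by auto
        ultimately show ?thesis unfolding adjrel_def by blast
      qed
      have sR1: "successively (\<lambda>u w. (u,w) \<in> R) (x # p')" "a \<notin> set (x # p')"
        using Cons.prems(1) pc unfolding tpath_def by auto
      have sR2: "successively (\<lambda>u w. (u,w) \<in> R) (y # q')" "a \<notin> set (y # q')"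
        using Cons.prems(2) q unfolding tpath_def by auto
      have s1: "successively (\<lambda>u w. (u,w) \<in> ?S) (x # p')"
        using sR1(1) by (rule successively_mono) (use sR1(2) step in blast)
      have s2: "successively (\<lambda>u w. (u,w) \<in> ?S) (y # q')"
        using sR2(1) by (rule successively_mono) (use sR2(2) step in blast)
      have "(x, last (x#p')) \<in> ?S\<^sup>*" using walk_rtrancl[OF s1] by simp
      moreover have "(y, last (y#q')) \<in> ?S\<^sup>*" using walk_rtrancl[OF s2] by simp
      moreover have "(a,y) \<in> ?S"
      proof -
        obtain e' where "e' \<in> Tr G" "ends G e' = {a,y}" using ax unfolding adjrel_def by blast
        moreover have "x \<noteq> a" using Cons.prems pc unfolding tpath_def by auto
        ultimately have "e' \<noteq> e" using e False by auto
        then show ?thesis using \<open>e' \<in> Tr G\<close> \<open>ends G e' = {a,y}\<close> unfolding adjrel_def by blast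
      qed
      moreover have "sym (?S\<^sup>*)" using sym_adjrel sym_rtrancl by blast
      ultimately have "(a,x) \<in> ?S\<^sup>*"
      proof -
        assume h1: "(x, last (x#p')) \<in> ?S\<^sup>*" and h2: "(y, last (y#q')) \<in> ?S\<^sup>*"
          and h3: "(a,y) \<in> ?S" and h4: "sym (?S\<^sup>*)"
        have "(last (x#p'), x) \<in> ?S\<^sup>*" using h1 h4 by (meson symD)
        then have "(last (y#q'), x) \<in> ?S\<^sup>*" using lasts by simp
        then have "(y, x) \<in> ?S\<^sup>*" using h2 by (rule rtrancl_trans[rotated])
        then show ?thesis by (rule converse_rtrancl_into_rtrancl[OF h3])
      qed
      with acyc2[OF e] show ?thesis by blast
    qed
  qed
qed

end

context UDS begin

lemma tpath_exists: assumes "a \<in> Vs G" "b \<in> Vs G"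
  shows "\<exists>p. tpath p \<and> hd p = a \<and> last p = b"
proof -
  have "(a,b) \<in> R\<^sup>*" using conn assms by blast
  then show ?thesis
  proof (induction rule: rtrancl_induct)
    case base
    then show ?case by (intro exI[of _ "[a]"]) (simp add: tpath_def)
  next
    case (step y z)
    then obtain p where p: "tpath p" "hd p = a" "last p = y" by blast
    show ?case
    proof (cases "z \<in> set p")
      case True
      then obtain xs ys where xs: "p = xs @ z # ys" by (meson split_list)
      have "tpath (xs @ [z])" using p(1) xs unfolding tpath_def
        by (auto simp: successively_append_iff)
      moreover have "hd (xs @ [z]) = a" using p(2) xs by (cases xs) auto
      ultimately show ?thesis by (intro exI[of _ "xs @ [z]"]) simp
    next
      case False
      have "tpath (p @ [z])" using p step(2) False unfolding tpath_def
        by (auto simp: successively_append_iff)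
      moreover have "hd (p @ [z]) = a" using p(2) p(1) by (simp add: tpath_def)
      ultimately show ?thesis by (intro exI[of _ "p @ [z]"]) simp
    qed
  qed
qed

lemma geo_eq: assumes "tpath p" shows "geo G (hd p) (last p) = p"
  unfolding geo_def
proof (rule the_equality)
  show "p \<noteq> [] \<and> hd p = hd p \<and> last p = last p \<and> distinct p \<and>
    (\<forall>i. Suc i < length p \<longrightarrow> (p ! i, p ! Suc i) \<in> R)"
    using assms unfolding tpath_def successively_conv_nth by blast
next
  fix q assume "q \<noteq> [] \<and> hd q = hd p \<and> last q = last p \<and> distinct q \<and>
    (\<forall>i. Suc i < length q \<longrightarrow> (q ! i, q ! Suc i) \<in> R)"
  then have "tpath q" "hd q = hd p" "last q = last p"
    unfolding tpath_def successively_conv_nth by blast+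
  then show "q = p" using tpath_uniq assms by blast
qed

lemma geo: assumes "a \<in> Vs G" "b \<in> Vs G"
  shows "tpath (geo G a b) \<and> hd (geo G a b) = a \<and> last (geo G a b) = b"
  using tpath_exists[OF assms] geo_eq by metis

lemma geo_eq2: "tpath p \<Longrightarrow> hd p = a \<Longrightarrow> last p = b \<Longrightarrow> geo G a b = p"
  using geo_eq by blast

lemma tpath_Vs: "tpath p \<Longrightarrow> hd p \<in> Vs G \<Longrightarrow> set p \<subseteq> Vs G"
proof (induction p)
  case Nil then show ?case by simp
next
  case (Cons a p)
  show ?case
  proof (cases p)
    case Nil then show ?thesis using Cons by simp
  next
    case (Cons b q)
    then have "(a,b) \<in> R" "tpath p" using Cons.prems unfolding tpath_def by auto
    then show ?thesis using Cons.IH R_Vs Cons.prems \<open>p = b # q\<close> by auto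
  qed
qed

lemma tpath_rev: "tpath p \<Longrightarrow> tpath (rev p)"
  unfolding tpath_def
  by (auto elim!: successively_mono intro: adjrel_sym)

lemma tpath_prefix: "tpath (xs @ ys) \<Longrightarrow> xs \<noteq> [] \<Longrightarrow> tpath xs"
  unfolding tpath_def by (auto simp: successively_append_iff)

lemma tpath_suffix: "tpath (xs @ ys) \<Longrightarrow> ys \<noteq> [] \<Longrightarrow> tpath ys"
  unfolding tpath_def by (auto simp: successively_append_iff)

abbreviation P where "P v \<equiv> geo G (base G) v"

definition par where "par v = geo G v (base G) ! 1"

lemma P: "v \<in> Vs G \<Longrightarrow> tpath (P v) \<and> hd (P v) = base G \<and> last (P v) = v"
  using geo base_Vs by blast

lemma P_base: "P (base G) = [base G]"
  using geo_eq2[of "[base G]"] by (simp add: tpath_def)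

lemma par: assumes "v \<in> Vs G" "v \<noteq> base G"
  shows "P v = P (par v) @ [v] \<and> par v \<in> Vs G \<and> (par v, v) \<in> R \<and> par v \<noteq> v
     \<and> (v, par v) \<in> R"
proof -
  let ?g = "geo G v (base G)"
  have g: "tpath ?g" "hd ?g = v" "last ?g = base G" using geo assms base_Vs by blast+
  then obtain t where t: "?g = v # t" by (cases ?g) (auto simp: tpath_def)
  have "t \<noteq> []" using t g assms by auto
  then obtain w t' where t': "t = w # t'" by (cases t) auto
  have pw: "par v = w" unfolding par_def using t t' by simp
  have tp: "tpath t" using tpath_suffix[of "[v]" t] g t \<open>t \<noteq> []\<close> by simp
  have vw: "(v,w) \<in> R" "v \<noteq> w" using g(1) t t' unfolding tpath_def by auto
  have "last t = base G" using g t \<open>t \<noteq> []\<close> by simp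
  then have "geo G w (base G) = t" using geo_eq2 tp t' by simp
  have "P v = rev ?g" using geo_eq2[OF tpath_rev[OF g(1)]] g tpath_def
    by (simp add: hd_rev last_rev)
  moreover have "P w = rev t"
  proof -
    have h1: "hd (rev t) = base G" using \<open>last t = base G\<close> \<open>t \<noteq> []\<close> by (simp add: hd_rev)
    have h2: "last (rev t) = w" using t' by (simp add: last_rev)
    show ?thesis using geo_eq2[OF tpath_rev[OF tp] h1 h2] .
  qed
  ultimately have "P v = P w @ [v]" using t by simp
  moreover have "w \<in> Vs G" using R_Vs vw by blast
  moreover have "(w,v) \<in> R" using adjrel_sym[OF vw(1)] .
  ultimately show ?thesis using pw vw by simp
qed

lemma anc_prefix: assumes "v \<in> Vs G" "z \<in> set (P v)"
  shows "prefix (P z) (P v) \<and> z \<in> Vs G"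
proof -
  obtain xs ys where xs: "P v = xs @ z # ys" using assms(2) by (meson split_list)
  have tp: "tpath (xs @ [z])" using tpath_prefix[of "xs @ [z]" ys] P[OF assms(1)] xs by simp
  have "hd (xs @ [z]) = base G" using P[OF assms(1)] xs by (cases xs) auto
  then have "P z = xs @ [z]" using geo_eq2[OF tp] by simp
  moreover have "z \<in> Vs G" using tpath_Vs[OF conjunct1[OF P[OF assms(1)]]] P[OF assms(1)] assms(2)
      base_Vs by auto
  ultimately show ?thesis using xs by simp
qed

lemma P_inj: "a \<in> Vs G \<Longrightarrow> b \<in> Vs G \<Longrightarrow> P a = P b \<Longrightarrow> a = b"
  using P by metis

lemma orient: assumes "(a,b) \<in> R"
  shows "(b \<noteq> base G \<and> par b = a) \<or> (a \<noteq> base G \<and> par a = b)"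
proof -
  have V: "a \<in> Vs G" "b \<in> Vs G" using R_Vs assms by auto
  have ab: "a \<noteq> b" using R_irrefl assms by blast
  note Pa = P[OF V(1)]
  show ?thesis
  proof (cases "b \<in> set (P a)")
    case False
    have "tpath (P a @ [b])" using Pa False assms unfolding tpath_def
      by (auto simp: successively_append_iff)
    then have "P b = P a @ [b]" using geo_eq2 Pa by (simp add: tpath_def)
    moreover have "b \<noteq> base G" using False Pa hd_in_set[of "P a"] by (auto simp: tpath_def)
    ultimately have "P (par b) = P a" "par b \<in> Vs G" using par[OF V(2)] by auto
    then have "par b = a" using P_inj[of "par b" a] V by simp
    then show ?thesis using \<open>b \<noteq> base G\<close> by blast
  next
    case True
    then obtain xs ys where xs: "P a = xs @ b # ys" by (meson split_list)
    have "ys \<noteq> []" using xs Pa ab by auto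
    have "last ys = a" using Pa xs \<open>ys \<noteq> []\<close> by simp
    then have "a \<in> set ys" using \<open>ys \<noteq> []\<close> last_in_set by blast
    then have "a \<notin> set xs" using Pa xs unfolding tpath_def by auto
    have "tpath (xs @ [b])" using tpath_prefix[of "xs @ [b]" ys] Pa xs by simp
    then have "tpath (xs @ [b, a])" using \<open>a \<notin> set xs\<close> ab adjrel_sym[OF assms]
      unfolding tpath_def by (auto simp: successively_append_iff)
    moreover have "hd (xs @ [b,a]) = base G" using Pa xs by (cases xs) auto
    ultimately have Pa2: "P a = xs @ [b, a]" using geo_eq2 by simp
    have "a \<noteq> base G"
    proof
      assume "a = base G"
      then have "xs @ [b,a] = [base G]" using Pa2 P_base by simp
      then show False by (cases xs) auto
    qed
    then have "P (par a) = xs @ [b]" "par a \<in> Vs G" using par[OF V(1)] Pa2 by auto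
    moreover have "P b = xs @ [b]"
    proof -
      have hb: "hd (xs @ [b]) = base G" using Pa xs by (cases xs) auto
      show ?thesis using geo_eq2[OF \<open>tpath (xs @ [b])\<close> hb] by simp
    qed
    ultimately have "par a = b" using P_inj[of "par a" b] V by simp
    then show ?thesis using \<open>a \<noteq> base G\<close> by blast
  qed
qed

lemma eT_par: assumes "v \<in> Vs G" "v \<noteq> base G"
  shows "eT G v \<in> Tr G \<and> ends G (eT G v) = {v, par v}"
proof -
  have "(v, par v) \<in> R" using par[OF assms] by blast
  then show ?thesis using tedgeR unfolding eT_def par_def[symmetric] by blast
qed

lemma tr_edge: assumes "e \<in> Tr G"
  shows "\<exists>v. v \<in> Vs G \<and> v \<noteq> base G \<and> ends G e = {v, par v} \<and> eT G v = e"
proof -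
  obtain a b where ab: "ends G e = {a,b}" using acyc[OF assms] by blast
  then have "(a,b) \<in> R" using assms unfolding adjrel_def by blast
  then have V: "a \<in> Vs G" "b \<in> Vs G" using R_Vs by auto
  from orient[OF \<open>(a,b) \<in> R\<close>] show ?thesis
  proof
    assume h: "b \<noteq> base G \<and> par b = a"
    then have "ends G (eT G b) = ends G e" "eT G b \<in> Tr G" using eT_par[OF V(2)] ab
      by (auto simp: insert_commute)
    then have "eT G b = e" using tr_uniq assms by blast
    then show ?thesis using h ab V by (auto simp: insert_commute)
  next
    assume h: "a \<noteq> base G \<and> par a = b"
    then have "ends G (eT G a) = ends G e" "eT G a \<in> Tr G" using eT_par[OF V(1)] ab
      by auto
    then have "eT G a = e" using tr_uniq assms by blast
    then show ?thesis using h ab V by auto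
  qed
qed

end


fun klist :: "('v,'e) gsetup \<Rightarrow> 'v list \<Rightarrow> nat list" where
  "klist G (x # y # zs) = lab G x (tedge G x y) # klist G (y # zs)"
| "klist G _ = []"

lemma klist_app: "xs \<noteq> [] \<Longrightarrow>
  klist G (xs @ y # zs) = klist G xs @ lab G (last xs) (tedge G (last xs) y) # klist G (y # zs)"
proof (induction xs)
  case Nil then show ?case by simp
next
  case (Cons a xs)
  then show ?case by (cases xs) auto
qed

lemma list_le_app: "(xs::nat list) \<le> xs @ ys"
  by (induction xs) auto

lemma list_not_le: "\<not> ((zs::nat list) @ p # r \<le> zs)"
  by (induction zs) auto

lemma list_cmp: "((zs::nat list) @ p # r \<le> zs @ q # s) \<longleftrightarrow> (p < q \<or> p = q \<and> r \<le> s)"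
  by (induction zs) auto

lemma lcp_exists: "\<exists>L ra rb. A = L @ ra \<and> B = L @ rb \<and> (ra = [] \<or> rb = [] \<or> hd ra \<noteq> hd rb)"
proof (induction A arbitrary: B)
  case Nil then show ?case by (intro exI[of _ "[]"] exI[of _ B]) simp
next
  case (Cons x A)
  show ?case
  proof (cases B)
    case Nil then show ?thesis by (intro exI[of _ "[]"] exI[of _ "x # A"]) simp
  next
    case (Cons y B')
    show ?thesis
    proof (cases "x = y")
      case False then show ?thesis using Cons by (intro exI[of _ "[]"] exI[of _ "x # A"] exI[of _ B]) simp
    next
      case True
      obtain L ra rb where h: "A = L @ ra \<and> B' = L @ rb \<and> (ra = [] \<or> rb = [] \<or> hd ra \<noteq> hd rb)"
        using Cons.IH by blast
      then show ?thesis using Cons True by (intro exI[of _ "x # L"] exI[of _ ra] exI[of _ rb]) simp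
    qed
  qed
qed

context UDS begin

lemma meet_lcp: assumes V: "a \<in> Vs G" "b \<in> Vs G" and A: "P a = L @ ra" and B: "P b = L @ rb"
  and L: "L \<noteq> []" and d: "ra = [] \<or> rb = [] \<or> hd ra \<noteq> hd rb"
  shows "meet G a b = last L \<and> P (last L) = L \<and> last L \<in> Vs G"
proof -
  note Pa = P[OF V(1)] and Pb = P[OF V(2)]
  have tpL: "tpath L" using tpath_prefix[of L ra] Pa A L by simp
  have hL: "hd L = base G" using Pa A L by simp
  have PL: "P (last L) = L" using geo_eq2[OF tpL hL] by simp
  have setL: "set L \<subseteq> Vs G" using tpath_Vs[OF tpL] hL base_Vs by simp
  have mV: "last L \<in> Vs G" using setL L by auto
  have I: "set (P a) \<inter> set (P b) = set L"
  proof
    show "set L \<subseteq> set (P a) \<inter> set (P b)" using A B by auto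
  next
    show "set (P a) \<inter> set (P b) \<subseteq> set L"
    proof
      fix z assume z: "z \<in> set (P a) \<inter> set (P b)"
      have za: "prefix (P z) (P a)" "z \<in> Vs G" using anc_prefix[OF V(1)] z by auto
      have zb: "prefix (P z) (P b)" using anc_prefix[OF V(2)] z by auto
      have "prefix L (P a)" using A by simp
      from prefix_same_cases[OF za(1) this] show "z \<in> set L"
      proof
        assume "prefix (P z) L"
        moreover have "z \<in> set (P z)" using P[OF za(2)] by (metis last_in_set tpath_def)
        ultimately show ?thesis using set_mono_prefix by blast
      next
        assume "prefix L (P z)"
        then obtain w where w: "P z = L @ w" by (auto simp: prefix_def)
        show ?thesis
        proof (cases "w = []")
          case True
          then show ?thesis using w P[OF za(2)] by (metis append.right_neutral last_in_set L)
        next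
          case False
          have "prefix w ra" using za(1) w A by simp
          moreover have "prefix w rb" using zb w B by simp
          ultimately have "ra \<noteq> [] \<and> rb \<noteq> [] \<and> hd ra = hd w \<and> hd rb = hd w"
            using False by (auto simp: prefix_def)
          then show ?thesis using d by simp
        qed
      qed
    qed
  qed
  have "meet G a b = last L"
    unfolding meet_def
  proof (rule the_equality)
    show "last L \<in> Vs G \<and> set (P (last L)) = set (P a) \<inter> set (P b)" using mV PL I by simp
  next
    fix x assume x: "x \<in> Vs G \<and> set (P x) = set (P a) \<inter> set (P b)"
    have "x \<in> set (P x)" using P[of x] x by (metis last_in_set tpath_def)
    then have "x \<in> set (P (last L))" using x I PL by simp
    then have 1: "prefix (P x) (P (last L))" using anc_prefix[OF mV] by blast
    have "last L \<in> set (P x)" using x I L by simp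
    then have 2: "prefix (P (last L)) (P x)" using anc_prefix x by blast
    from 1 2 have "P x = P (last L)" by (rule prefix_order.antisym)
    then show "x = last L" using P_inj x mV by blast
  qed
  then show ?thesis using PL mV by blast
qed

lemma vle_key: assumes V: "a \<in> Vs G" "b \<in> Vs G"
  shows "vle G a b \<longleftrightarrow> klist G (P a) \<le> klist G (P b)"
proof -
  note Pa = P[OF V(1)] and Pb = P[OF V(2)]
  obtain L ra rb where A: "P a = L @ ra" and B: "P b = L @ rb"
    and d: "ra = [] \<or> rb = [] \<or> hd ra \<noteq> hd rb" using lcp_exists by blast
  have L: "L \<noteq> []"
  proof
    assume "L = []"
    then have "ra = P a" "rb = P b" using A B by auto
    then show False using d Pa Pb by (auto simp: tpath_def)
  qed
  define m where "m = last L"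
  have M: "meet G a b = m" "P m = L" "m \<in> Vs G" using meet_lcp[OF V A B L d] m_def by auto
  have Lm: "L = butlast L @ [m]" using L m_def by simp
  have ma: "m \<noteq> a" if "ra \<noteq> []"
  proof
    assume "m = a"
    have "a = last ra" using Pa A that by simp
    then have "a \<in> set ra" using that by simp
    moreover have "m \<in> set L" using L m_def by simp
    ultimately show False using Pa A \<open>m = a\<close> by (auto simp: tpath_def)
  qed
  have mb: "m \<noteq> b" if "rb \<noteq> []"
  proof
    assume "m = b"
    have "b = last rb" using Pb B that by simp
    then have "b \<in> set rb" using that by simp
    moreover have "m \<in> set L" using L m_def by simp
    ultimately show False using Pb B \<open>m = b\<close> by (auto simp: tpath_def)
  qed
  show ?thesis
  proof (cases "ra = []")
    case True
    then have "m = a" using Pa A m_def by simp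
    then have "vle G a b" unfolding vle_def using M by simp
    moreover have "klist G (P a) \<le> klist G (P b)"
    proof (cases rb)
      case Nil then show ?thesis using A B True by simp
    next
      case (Cons y r)
      then show ?thesis using A B True by (simp add: klist_app[OF L] list_le_app)
    qed
    ultimately show ?thesis by simp
  next
    case ran: False
    then obtain x ra' where x: "ra = x # ra'" by (cases ra) auto
    show ?thesis
    proof (cases "rb = []")
      case True
      then have "m = b" using Pb B m_def by simp
      then have "\<not> vle G a b" unfolding vle_def using M ma[OF ran] by (simp add: gdir_def)
      moreover have "\<not> klist G (P a) \<le> klist G (P b)"
        using A B True x by (simp add: klist_app[OF L] list_not_le)
      ultimately show ?thesis by simp
    next
      case rbn: False
      then obtain y rb' where y: "rb = y # rb'" by (cases rb) auto
      have xy: "x \<noteq> y" using d x y by simp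
      have tpa: "tpath (m # ra)" using tpath_suffix[of "butlast L" "m # ra"] Pa A Lm
        by (metis append.assoc append_Cons append_Nil list.distinct(1))
      have tpb: "tpath (m # rb)" using tpath_suffix[of "butlast L" "m # rb"] Pb B Lm
        by (metis append.assoc append_Cons append_Nil list.distinct(1))
      have ga: "geo G m a = m # ra" using geo_eq2[OF tpa] Pa A x by simp
      have gb: "geo G m b = m # rb" using geo_eq2[OF tpb] Pb B y by simp
      have Rx: "(m,x) \<in> R" "m \<noteq> x" using tpa x unfolding tpath_def by auto
      have Ry: "(m,y) \<in> R" "m \<noteq> y" using tpb y unfolding tpath_def by auto
      have ex: "tedge G m x \<in> Tr G" "ends G (tedge G m x) = {m,x}" using tedgeR[OF Rx(1)] by auto
      have ey: "tedge G m y \<in> Tr G" "ends G (tedge G m y) = {m,y}" using tedgeR[OF Ry(1)] by auto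
      have "tedge G m x \<noteq> tedge G m y"
      proof
        assume "tedge G m x = tedge G m y"
        then have "{m,x} = {m,y}" using ex ey by simp
        then show False using xy Rx(2) by (auto simp: doubleton_eq_iff)
      qed
      then have lne: "lab G m (tedge G m x) \<noteq> lab G m (tedge G m y)"
        using lab_inj[OF M(3)] ex ey unfolding inj_on_def by blast
      have "vle G a b \<longleftrightarrow> lab G m (tedge G m x) < lab G m (tedge G m y)"
        unfolding vle_def Let_def M(1) gdir_def using ma[OF ran] mb[OF rbn] ga gb x y by simp
      moreover have "klist G (P a) \<le> klist G (P b) \<longleftrightarrow>
          lab G m (tedge G m x) < lab G m (tedge G m y)"
        using A B x y lne m_def by (simp add: klist_app[OF L] list_cmp)
      ultimately show ?thesis by simp
    qed
  qed
qed

lemma meet_sym: "meet G a b = meet G b a"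
  unfolding meet_def by (simp add: Int_commute)

lemma vle_refl: "a \<in> Vs G \<Longrightarrow> vle G a a"
  using vle_key by simp

lemma vle_total: assumes "a \<in> Vs G" "b \<in> Vs G" shows "vle G a b \<or> vle G b a"
  unfolding vle_key[OF assms] vle_key[OF assms(2,1)] by (rule linear)

lemma vle_trans: assumes "a \<in> Vs G" "b \<in> Vs G" "c \<in> Vs G" "vle G a b" "vle G b c"
  shows "vle G a c"
  using assms(4,5) unfolding vle_key[OF assms(1,2)] vle_key[OF assms(2,3)] vle_key[OF assms(1,3)]
  by (rule order_trans)

lemma vle_antisym: "vle G a b \<Longrightarrow> vle G b a \<Longrightarrow> a = b"
proof -
  assume h1: "vle G a b" and h2: "vle G b a"
  define m where "m = meet G a b"
  have m2: "meet G b a = m" using meet_sym m_def by simp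
  have g0: "gdir G x x = 0" for x by (simp add: gdir_def)
  from h1 have A: "m = a \<or> (m \<noteq> a \<and> gdir G m a < gdir G m b)" unfolding vle_def Let_def m_def .
  from h2 have B: "m = b \<or> (m \<noteq> b \<and> gdir G m b < gdir G m a)" unfolding vle_def Let_def m2 .
  show "a = b"
  proof (cases "m = a")
    case True
    then show ?thesis using B g0 by force
  next
    case False
    then show ?thesis using A B g0 by force
  qed
qed

lemma par_lt: assumes "v \<in> Vs G" "v \<noteq> base G" shows "vlt G (par v) v"
proof -
  have p: "P v = P (par v) @ [v]" "par v \<in> Vs G" "par v \<noteq> v" using par[OF assms] by auto
  have "P (par v) \<noteq> []" using P[OF p(2)] by (simp add: tpath_def)
  then have "klist G (P (par v)) \<le> klist G (P v)" using p(1) klist_app[of "P (par v)" G v "[]"]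
    list_le_app by simp
  then show ?thesis unfolding vlt_def using vle_key p assms by auto
qed

end


lemma clo_Inl[simp]: "clo G (Inl v) = {Inl v}" by (simp add: clo_def)
lemma clo_Inr[simp]: "clo G (Inr e) = insert (Inr e) (Inl ` ends G e)" by (simp add: clo_def)

context UDS begin

lemma vfacts: assumes "v \<in> Vs G" "v \<noteq> base G"
  shows "eT G v \<in> Tr G \<and> ends G (eT G v) = {v, par v} \<and> par v \<in> Vs G \<and> par v \<noteq> v
    \<and> vlt G (par v) v \<and> iota G (eT G v) = v \<and> tau G (eT G v) = par v"
proof -
  have e: "eT G v \<in> Tr G" "ends G (eT G v) = {v, par v}" using eT_par[OF assms] by auto
  have p: "par v \<in> Vs G" "par v \<noteq> v" using par[OF assms] by auto
  have lt: "vlt G (par v) v" using par_lt[OF assms] .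
  have ne: "\<not> vle G v (par v)" using lt vle_antisym p(2) unfolding vlt_def by blast
  have "iota G (eT G v) = v" unfolding iota_def e(2)
    by (rule the_equality) (use lt vle_refl assms ne in \<open>auto simp: vlt_def\<close>)
  moreover have "tau G (eT G v) = par v" unfolding tau_def e(2)
    by (rule the_equality) (use lt vle_refl p ne in \<open>auto simp: vlt_def\<close>)
  ultimately show ?thesis using e p lt by blast
qed

lemma efacts: assumes "e \<in> Tr G"
  shows "iota G e \<in> Vs G \<and> iota G e \<noteq> base G \<and> eT G (iota G e) = e \<and>
    ends G e = {iota G e, tau G e} \<and> tau G e = par (iota G e)"
proof -
  obtain v where v: "v \<in> Vs G" "v \<noteq> base G" "ends G e = {v, par v}" "eT G v = e"
    using tr_edge[OF assms] by blast
  show ?thesis using vfacts[OF v(1,2)] v by auto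
qed

lemma ex_min: assumes "finite X" "X \<noteq> {}" "X \<subseteq> Vs G"
  shows "\<exists>x\<in>X. \<forall>y\<in>X. vle G x y"
  using assms
proof (induction X rule: finite_ne_induct)
  case (singleton x) then show ?case using vle_refl by auto
next
  case (insert x F)
  then obtain m where m: "m \<in> F" "\<forall>y\<in>F. vle G m y" by auto
  have V: "x \<in> Vs G" "m \<in> Vs G" using insert m by auto
  show ?case
  proof (cases "vle G x m")
    case True
    then show ?thesis using m vle_refl V vle_trans insert.prems by (metis insert_iff subset_iff)
  next
    case False
    then have "vle G m x" using vle_total V by blast
    then show ?thesis using m by auto
  qed
qed

lemma cellV: "is_cell G n c \<Longrightarrow> Inl v \<in> c \<Longrightarrow> v \<in> Vs G"
  unfolding is_cell_def by auto
lemma cellE: "is_cell G n c \<Longrightarrow> Inr e \<in> c \<Longrightarrow> e \<in> Es G"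
  unfolding is_cell_def by auto
lemma cellD: "is_cell G n c \<Longrightarrow> x \<in> c \<Longrightarrow> y \<in> c \<Longrightarrow> x \<noteq> y \<Longrightarrow> clo G x \<inter> clo G y = {}"
  unfolding is_cell_def by auto
lemma cell_end: "is_cell G n c \<Longrightarrow> Inr e \<in> c \<Longrightarrow> v \<in> ends G e \<Longrightarrow> Inl v \<notin> c"
  using cellD[of n c "Inr e" "Inl v"] by auto

lemma blk: assumes c: "is_cell G n d" and v: "Inl v \<in> d" "v \<noteq> base G"
  and x: "x \<in> d" "x \<noteq> Inl v" and i: "clo G (Inr (eT G v)) \<inter> clo G x \<noteq> {}"
  shows "Inl (par v) \<in> clo G x"
proof -
  have vV: "v \<in> Vs G" using cellV c v by blast
  note f = vfacts[OF vV v(2)]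
  obtain z where z: "z \<in> clo G (Inr (eT G v))" "z \<in> clo G x" using i by blast
  have cl: "clo G (Inr (eT G v)) = {Inr (eT G v), Inl v, Inl (par v)}" using f by simp
  have dis: "clo G x \<inter> clo G (Inl v) = {}" using cellD[OF c x(1) v(1) x(2)] .
  show ?thesis
  proof -
    have "z \<noteq> Inl v" using dis z by auto
    moreover have "z \<noteq> Inr (eT G v)"
    proof
      assume "z = Inr (eT G v)"
      then have "x = Inr (eT G v)" using z(2) by (cases x) auto
      then show False using dis f by auto
    qed
    ultimately show ?thesis using z cl by auto
  qed
qed

lemma OR_facts: assumes "order_resp G c e"
  shows "Inr e \<in> c \<and> e \<in> Tr G"
  using assms unfolding order_resp_def by blast

lemma mor: assumes c: "is_cell G n c" and ex: "\<exists>e. order_resp G c e"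
  shows "order_resp G c (min_order_resp G c) \<and>
     (\<forall>e'. order_resp G c e' \<longrightarrow> vle G (iota G (min_order_resp G c)) (iota G e'))"
proof -
  let ?X = "{e. order_resp G c e}"
  have fc: "finite c" using c unfolding is_cell_def by blast
  have "?X \<subseteq> Inr -` c" using OR_facts by blast
  then have fX: "finite ?X" using finite_vimageI[OF fc] inj_Inr by (metis finite_subset)
  have XV: "iota G ` ?X \<subseteq> Vs G" using OR_facts efacts by blast
  obtain m where m: "m \<in> iota G ` ?X" "\<forall>y\<in>iota G ` ?X. vle G m y"
    using ex_min[of "iota G ` ?X"] fX XV ex by blast
  then obtain e0 where e0: "order_resp G c e0" "m = iota G e0" by blast
  have "min_order_resp G c = e0" unfolding min_order_resp_def
  proof (rule the_equality)
    show "order_resp G c e0 \<and> (\<forall>e'. order_resp G c e' \<longrightarrow> vle G (iota G e0) (iota G e'))"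
      using e0 m by blast
  next
    fix e1 assume e1: "order_resp G c e1 \<and> (\<forall>e'. order_resp G c e' \<longrightarrow> vle G (iota G e1) (iota G e'))"
    then have "iota G e1 = iota G e0" using e0 m vle_antisym by blast
    then show "e1 = e0" using efacts OR_facts e1 e0 by metis
  qed
  then show ?thesis using e0 m by blast
qed

lemma min_unbl: assumes c: "is_cell G n c" and ex: "\<exists>v. unblocked G c v"
  shows "\<exists>u. unblocked G c u \<and> (\<forall>w. unblocked G c w \<longrightarrow> vle G u w)"
proof -
  let ?X = "{v. unblocked G c v}"
  have fc: "finite c" using c unfolding is_cell_def by blast
  have "?X \<subseteq> Inl -` c" unfolding unblocked_def by blast
  then have fX: "finite ?X" using finite_vimageI[OF fc] inj_Inl by (metis finite_subset)
  have "?X \<subseteq> Vs G" using cellV[OF c] unfolding unblocked_def by blast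
  then show ?thesis using ex_min[of ?X] fX ex by blast
qed

lemma principal_eq: assumes u: "unblocked G c u" "\<forall>w. unblocked G c w \<longrightarrow> vle G u w"
  shows "principal G c = Some (elred G c u)"
proof -
  have "(THE v. unblocked G c v \<and> (\<forall>w. unblocked G c w \<longrightarrow> vle G v w)) = u"
    by (rule the_equality) (use u vle_antisym in blast)+
  then show ?thesis unfolding principal_def using u by auto
qed

end


context UDS begin

definition Cc where "Cc c \<longleftrightarrow> (\<exists>e. order_resp G c e) \<and>
  (\<forall>v. Inl v \<in> c \<and> vlt G v (iota G (min_order_resp G c)) \<longrightarrow> blocked G c v)"

lemma cdim_fin: "is_cell G n c \<Longrightarrow> finite {e. Inr e \<in> c}"
  unfolding is_cell_def using finite_vimageI[of c Inr] inj_Inr by (simp add: vimage_def)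

lemma lemA: assumes d: "is_cell G n d" and u: "unblocked G d u"
  and umin: "\<forall>w. unblocked G d w \<longrightarrow> vle G u w"
  shows "is_cell G n (elred G d u) \<and> cdim (elred G d u) = Suc (cdim d) \<and> Cc (elred G d u)"
proof -
  define c where "c = elred G d u"
  define eu where "eu = eT G u"
  have uV: "u \<in> Vs G" "u \<noteq> base G" "Inl u \<in> d" using u cellV[OF d] unfolding unblocked_def by auto
  note f = vfacts[OF uV(1,2), folded eu_def]
  have f_ends: "ends G eu = {u, par u}" and f_pne: "par u \<noteq> u" using f by blast+
  have ub: "\<forall>x\<in>d. x \<noteq> Inl u \<longrightarrow> clo G (Inr eu) \<inter> clo G x = {}"
    using u unfolding unblocked_def eu_def by blast
  have c_def': "c = insert (Inr eu) (d - {Inl u})" unfolding c_def elred_def eu_def ..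
  have nin: "Inr eu \<notin> d" using ub by force
  have fd: "finite d" "card d = n" using d unfolding is_cell_def by auto
  have cell: "is_cell G n c"
    unfolding is_cell_def
  proof (intro conjI)
    show "finite c" using fd c_def' by simp
    have "card d > 0" using fd uV(3) card_gt_0_iff by blast
    then show "card c = n" using fd c_def' nin uV(3) by (simp add: card_Diff_singleton)
    show "c \<subseteq> Inl ` Vs G \<union> Inr ` Es G" using d f TrEs c_def' unfolding is_cell_def by auto
    show "\<forall>x\<in>c. \<forall>y\<in>c. x \<noteq> y \<longrightarrow> clo G x \<inter> clo G y = {}"
    proof (intro ballI impI)
      fix x y assume xy: "x \<in> c" "y \<in> c" "x \<noteq> y"
      show "clo G x \<inter> clo G y = {}"
      proof (cases "x = Inr eu")
        case True
        then show ?thesis using xy ub c_def' by auto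
      next
        case False
        note xF = this
        show ?thesis
        proof (cases "y = Inr eu")
          case True
          then have "clo G y \<inter> clo G x = {}" using xy ub c_def' xF by auto
          then show ?thesis by (simp add: Int_commute)
        next
          case False
          then show ?thesis using xy xF cellD[OF d] c_def' by auto
        qed
      qed
    qed
  qed
  have cd: "cdim c = Suc (cdim d)"
  proof -
    have "{e. Inr e \<in> c} = insert eu {e. Inr e \<in> d}" using c_def' by auto
    then show ?thesis unfolding cdim_def using nin cdim_fin[OF d] by simp
  qed
  have ORu: "order_resp G c eu"
    unfolding order_resp_def
  proof (intro conjI allI impI)
    show "Inr eu \<in> c" using c_def' by simp
    show "eu \<in> Tr G" using f by blast
    fix v assume v: "Inl v \<in> c \<and> v \<noteq> base G \<and>
      clo G (Inr (eT G v)) \<inter> clo G (Inr eu) = {Inl (tau G eu)}"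
    have v1: "Inl v \<in> c" and v2: "v \<noteq> base G"
      and v3: "clo G (Inr (eT G v)) \<inter> clo G (Inr eu) = {Inl (tau G eu)}" using v by blast+
    have vd: "Inl v \<in> d" "v \<noteq> u" using v1 c_def' by auto
    have vV: "v \<in> Vs G" using cellV[OF d vd(1)] .
    note fv = vfacts[OF vV v2]
    have "Inl (tau G eu) \<in> clo G (Inr (eT G v))" using v3 by blast
    then have "Inl (par u) \<in> clo G (Inr (eT G v))" using f by simp
    then have pu: "par u = v \<or> par u = par v" using fv by auto
    show "vlt G (iota G eu) v"
    proof (rule ccontr)
      assume nlt: "\<not> vlt G (iota G eu) v"
      show False
      proof (cases "par u = v")
        case True
        then have "clo G (Inr eu) \<inter> clo G (Inl v) \<noteq> {}" using f by auto
        then show False using ub vd by blast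
      next
        case False
        then have pp: "par u = par v" using pu by simp
        have "\<not> vle G u v" using nlt f vd(2) unfolding vlt_def by simp
        then have "\<not> unblocked G d v" using umin by blast
        then obtain x where x: "x \<in> d" "x \<noteq> Inl v" "clo G (Inr (eT G v)) \<inter> clo G x \<noteq> {}"
          using vd(1) v2 unfolding unblocked_def by blast
        have "Inl (par u) \<in> clo G x" using blk[OF d vd(1) v2 x] pp by simp
        moreover have "x \<noteq> Inl u" using calculation f_pne by auto
        moreover have "Inl (par u) \<in> clo G (Inr eu)" using f_ends by simp
        ultimately show False using ub x(1) by blast
      qed
    qed
  qed
  have Cc: "Cc c"
    unfolding Cc_def
  proof (intro conjI allI impI)
    show "\<exists>e. order_resp G c e" using ORu by blast
    fix v assume v: "Inl v \<in> c \<and> vlt G v (iota G (min_order_resp G c))"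
    have exOR: "\<exists>e. order_resp G c e" using ORu by blast
    note M = mor[OF cell exOR]
    have f_io: "iota G eu = u" using f by blast
    have "vle G (iota G (min_order_resp G c)) (iota G eu)" using M ORu by blast
    then have mle: "vle G (iota G (min_order_resp G c)) u" using f_io by simp
    have "min_order_resp G c \<in> Tr G" using M OR_facts by blast
    then have mV: "iota G (min_order_resp G c) \<in> Vs G" using efacts by blast
    have vd: "Inl v \<in> d" "v \<noteq> u" using v c_def' by auto
    have vV: "v \<in> Vs G" using cellV[OF d vd(1)] .
    have vu: "vle G v u" using vle_trans[OF vV mV uV(1)] v mle unfolding vlt_def by blast
    show "blocked G c v"
    proof (cases "v = base G")
      case True then show ?thesis using v unfolding blocked_def unblocked_def by blast
    next
      case False
      have "\<not> unblocked G d v" using umin vu vle_antisym vd(2) by blast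
      then obtain x where x: "x \<in> d" "x \<noteq> Inl v" "clo G (Inr (eT G v)) \<inter> clo G x \<noteq> {}"
        using vd(1) False unfolding unblocked_def by blast
      have "x \<noteq> Inl u"
      proof
        assume "x = Inl u"
        then have "Inl (par v) \<in> {Inl u}" using blk[OF d vd(1) False x] by simp
        then have "vlt G u v" using vfacts[OF vV False] by simp
        then show False using vu vle_antisym vd(2) unfolding vlt_def by blast
      qed
      then have "x \<in> c" using x c_def' by simp
      then show ?thesis using x v False unfolding blocked_def unblocked_def by blast
    qed
  qed
  show ?thesis using cell cd Cc unfolding c_def by blast
qed

end


context UDS begin

lemma lemB: assumes c: "is_cell G n c" and C: "Cc c"
  shows "\<exists>d. is_cell G n d \<and> Suc (cdim d) = cdim c \<and> (\<exists>v. unblocked G d v) \<and> \<not> Cc d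
     \<and> principal G d = Some c"
proof -
  have exOR: "\<exists>e. order_resp G c e" using C unfolding Cc_def by blast
  have Cb: "\<And>v. Inl v \<in> c \<Longrightarrow> vlt G v (iota G (min_order_resp G c)) \<Longrightarrow> blocked G c v"
    using C unfolding Cc_def by blast
  note M = mor[OF c exOR]
  define e where "e = min_order_resp G c"
  define i where "i = iota G e"
  define t where "t = tau G e"
  have ORe: "order_resp G c e" and emin: "\<And>e'. order_resp G c e' \<Longrightarrow> vle G i (iota G e')"
    using M unfolding e_def i_def by blast+
  have eT: "e \<in> Tr G" "Inr e \<in> c" using OR_facts[OF ORe] by auto
  note ef = efacts[OF eT(1), folded i_def t_def]
  have iV: "i \<in> Vs G" and ib: "i \<noteq> base G" and eTi: "eT G i = e" and ee: "ends G e = {i, t}"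
    and tp: "t = par i" using ef by blast+
  have it: "i \<noteq> t" using vfacts[OF iV ib] tp by metis
  have inc: "Inl i \<notin> c" using cell_end[OF c eT(2)] ee by simp
  define d where "d = insert (Inl i) (c - {Inr e})"
  have fc: "finite c" "card c = n" using c unfolding is_cell_def by auto
  have cell: "is_cell G n d"
    unfolding is_cell_def
  proof (intro conjI)
    show "finite d" using fc d_def by simp
    have "card c > 0" using fc eT(2) card_gt_0_iff by blast
    then show "card d = n" using fc d_def inc eT(2) by (simp add: card_Diff_singleton)
    show "d \<subseteq> Inl ` Vs G \<union> Inr ` Es G" using c iV d_def unfolding is_cell_def by auto
    show "\<forall>x\<in>d. \<forall>y\<in>d. x \<noteq> y \<longrightarrow> clo G x \<inter> clo G y = {}"
    proof (intro ballI impI)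
      have key: "clo G (Inl i) \<inter> clo G y = {}" if "y \<in> c" "y \<noteq> Inr e" for y
      proof -
        have "clo G (Inr e) \<inter> clo G y = {}" using cellD[OF c eT(2) that(1)] that(2) by auto
        moreover have "clo G (Inl i) \<subseteq> clo G (Inr e)" using ee by simp
        ultimately show ?thesis by blast
      qed
      fix x y assume xy: "x \<in> d" "y \<in> d" "x \<noteq> y"
      show "clo G x \<inter> clo G y = {}"
      proof (cases "x = Inl i")
        case True
        then show ?thesis using xy key d_def by auto
      next
        case False
        note xF = this
        show ?thesis
        proof (cases "y = Inl i")
          case True
          then have "clo G y \<inter> clo G x = {}" using xy key d_def xF by auto
          then show ?thesis by (simp add: Int_commute)
        next
          case False
          then show ?thesis using xy xF cellD[OF c] d_def by auto
        qed
      qed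
    qed
  qed
  have cd: "Suc (cdim d) = cdim c"
  proof -
    have "{e'. Inr e' \<in> d} = {e'. Inr e' \<in> c} - {e}" using d_def by auto
    moreover have ein: "e \<in> {e'. Inr e' \<in> c}" using eT(2) by simp
    moreover have "card {e'. Inr e' \<in> c} > 0" using cdim_fin[OF c] ein card_gt_0_iff by blast
    ultimately show ?thesis unfolding cdim_def using cdim_fin[OF c] ein
      by (simp add: card_Diff_singleton)
  qed
  have ui: "unblocked G d i"
    unfolding unblocked_def
  proof (intro conjI ballI impI)
    show "Inl i \<in> d" using d_def by simp
    show "i \<noteq> base G" by (rule ib)
    fix x assume x: "x \<in> d" "x \<noteq> Inl i"
    then have "x \<in> c" "x \<noteq> Inr e" using d_def by auto
    then show "clo G (Inr (eT G i)) \<inter> clo G x = {}" using cellD[OF c eT(2)] eTi by auto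
  qed
  have imin: "\<forall>w. unblocked G d w \<longrightarrow> vle G i w"
  proof (intro allI impI)
    fix w assume w: "unblocked G d w"
    have wd: "Inl w \<in> d" and wb: "w \<noteq> base G" using w unfolding unblocked_def by auto
    have wV: "w \<in> Vs G" using cellV[OF cell wd] .
    show "vle G i w"
    proof (rule ccontr)
      assume nle: "\<not> vle G i w"
      then have wi: "w \<noteq> i" using vle_refl iV by blast
      have vwi: "vlt G w i" using vle_total[OF wV iV] nle wi unfolding vlt_def by blast
      have wc: "Inl w \<in> c" using wd wi d_def by auto
      have "blocked G c w" using Cb[OF wc] vwi unfolding e_def i_def by simp
      then obtain x where x: "x \<in> c" "x \<noteq> Inl w" "clo G (Inr (eT G w)) \<inter> clo G x \<noteq> {}"
        using wb unfolding blocked_def unblocked_def by blast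
      show False
      proof (cases "x = Inr e")
        case False
        then have "x \<in> d" using x d_def by simp
        then show False using w x unfolding unblocked_def by blast
      next
        case True
        have "Inl (par w) \<in> clo G (Inr e)" using blk[OF c wc wb x] True by simp
        then have "par w = i \<or> par w = t" using ee by auto
        then show False
        proof
          assume "par w = i"
          then have "vlt G i w" using vfacts[OF wV wb] by simp
          then show False using vwi vle_antisym unfolding vlt_def by blast
        next
          assume pw: "par w = t"
          have wne: "w \<notin> ends G e" using cell_end[OF c eT(2)] wc by blast
          have fw: "ends G (eT G w) = {w, par w}" using vfacts[OF wV wb] by blast
          have "eT G w \<noteq> e" using fw wne by auto
          then have "clo G (Inr (eT G w)) \<inter> clo G (Inr e) = {Inl (tau G e)}"
            using fw pw ee wne it t_def by auto
          then have "vlt G (iota G e) w" using ORe wc wb unfolding order_resp_def by blast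
          then show False using vwi vle_antisym unfolding vlt_def i_def by blast
        qed
      qed
    qed
  qed
  have pr: "principal G d = Some c"
  proof -
    have "principal G d = Some (elred G d i)" using principal_eq[OF ui imin] .
    moreover have "elred G d i = c" unfolding elred_def eTi d_def using eT(2) inc by auto
    ultimately show ?thesis by simp
  qed
  have nC: "\<not> Cc d"
  proof
    assume Cd: "Cc d"
    have exd: "\<exists>e. order_resp G d e" using Cd unfolding Cc_def by blast
    note Md = mor[OF cell exd]
    define e2 where "e2 = min_order_resp G d"
    have OR2: "order_resp G d e2" using Md e2_def by blast
    have "order_resp G c e2"
      using OR2 unfolding order_resp_def d_def by auto
    then have le: "vle G i (iota G e2)" using emin by blast
    have e2T: "e2 \<in> Tr G" "Inr e2 \<in> d" using OR_facts[OF OR2] by auto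
    have "e2 \<noteq> e" using e2T d_def by auto
    then have "iota G e2 \<noteq> i" using efacts[OF e2T(1)] eTi by metis
    then have "vlt G i (iota G e2)" using le unfolding vlt_def by simp
    then have "blocked G d i" using Cd d_def unfolding Cc_def e2_def by auto
    then show False using ui unfolding blocked_def by blast
  qed
  show ?thesis using cell cd ui nC pr by blast
qed

end


context UDS begin

lemma Cc_dim: assumes "is_cell G n c" "Cc c" shows "cdim c > 0"
proof -
  obtain e where "order_resp G c e" using assms(2) unfolding Cc_def by blast
  then have "e \<in> {e. Inr e \<in> c}" using OR_facts by blast
  then show ?thesis unfolding cdim_def using cdim_fin[OF assms(1)] card_gt_0_iff by blast
qed

lemma princ_ne: "principal G c \<noteq> None \<longleftrightarrow> (\<exists>v. unblocked G c v)"
  unfolding principal_def by simp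

lemma img_char: assumes W: "\<And>c. c \<in> Wdom G n i \<longleftrightarrow>
    is_cell G n c \<and> cdim c = i \<and> (\<exists>v. unblocked G c v) \<and> \<not> Cc c"
  and c: "is_cell G n c"
  shows "c \<in> (\<lambda>d. the (principal G d)) ` Wdom G n i \<longleftrightarrow> cdim c = Suc i \<and> Cc c"
proof
  assume "c \<in> (\<lambda>d. the (principal G d)) ` Wdom G n i"
  then obtain d where d: "d \<in> Wdom G n i" "c = the (principal G d)" by blast
  have dc: "is_cell G n d" "cdim d = i" "\<exists>v. unblocked G d v" using W d(1) by auto
  obtain u where u: "unblocked G d u" "\<forall>w. unblocked G d w \<longrightarrow> vle G u w"
    using min_unbl[OF dc(1,3)] by blast
  have "c = elred G d u" using principal_eq[OF u] d(2) by simp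
  then show "cdim c = Suc i \<and> Cc c" using lemA[OF dc(1) u] dc(2) by simp
next
  assume h: "cdim c = Suc i \<and> Cc c"
  obtain d where d: "is_cell G n d" "Suc (cdim d) = cdim c" "\<exists>v. unblocked G d v" "\<not> Cc d"
    "principal G d = Some c" using lemB[OF c] h by blast
  have "d \<in> Wdom G n i" using W d h by simp
  moreover have "c = the (principal G d)" using d(5) by simp
  ultimately show "c \<in> (\<lambda>d. the (principal G d)) ` Wdom G n i" by blast
qed

lemma Wchar: "c \<in> Wdom G n i \<longleftrightarrow>
    is_cell G n c \<and> cdim c = i \<and> (\<exists>v. unblocked G c v) \<and> \<not> Cc c"
proof (induction i arbitrary: c)
  case 0
  have "\<not> Cc c" if "is_cell G n c" "cdim c = 0" using Cc_dim[OF that(1)] that(2) by auto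
  then show ?case using princ_ne by auto
next
  case (Suc i)
  show ?case
  proof (cases "is_cell G n c \<and> cdim c = Suc i")
    case True
    then have "c \<in> (\<lambda>d. the (principal G d)) ` Wdom G n i \<longleftrightarrow> Cc c"
      using img_char[OF Suc.IH] by blast
    then show ?thesis using True princ_ne by auto
  next
    case False
    then show ?thesis by auto
  qed
qed

lemma red_char: "is_cell G n c \<Longrightarrow> redundant G n c \<longleftrightarrow> (\<exists>v. unblocked G c v) \<and> \<not> Cc c"
  unfolding redundant_def using Wchar by blast

lemma col_char: assumes c: "is_cell G n c" shows "collapsible G n c \<longleftrightarrow> Cc c"
proof
  assume "collapsible G n c"
  then obtain i where "c \<in> (\<lambda>d. the (principal G d)) ` Wdom G n i" unfolding collapsible_def by blast
  then show "Cc c" using img_char[OF Wchar c] by blast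
next
  assume C: "Cc c"
  then obtain i where "cdim c = Suc i" using Cc_dim[OF c] gr0_implies_Suc by blast
  then have "c \<in> (\<lambda>d. the (principal G d)) ` Wdom G n i" using img_char[OF Wchar c] C by blast
  then show "collapsible G n c" unfolding collapsible_def by blast
qed

end

theorem mainTheorem7:
  fixes G :: "('v,'e) gsetup" and n :: nat and c :: "('v + 'e) set"
  assumes "UD_setup G" and "n \<ge> 1" and "is_cell G n c"
  shows "(critical G n c \<longleftrightarrow>
            (\<not> (\<exists>e. order_resp G c e)) \<and> (\<forall>v. Inl v \<in> c \<longrightarrow> blocked G c v))
       \<and> (redundant G n c \<longleftrightarrow>
            ((\<not> (\<exists>e. order_resp G c e)) \<and> (\<exists>v. unblocked G c v))
            \<or> ((\<exists>e. order_resp G c e) \<and>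
               (\<exists>v. unblocked G c v \<and> vlt G v (iota G (min_order_resp G c)))))
       \<and> (collapsible G n c \<longleftrightarrow>
            (\<exists>e. order_resp G c e) \<and>
            (\<forall>v. Inl v \<in> c \<and> vlt G v (iota G (min_order_resp G c)) \<longrightarrow> blocked G c v))"
proof -
  interpret UDS G by (rule UDS.intro) (rule assms(1))
  have R: "redundant G n c \<longleftrightarrow> (\<exists>v. unblocked G c v) \<and> \<not> Cc c" using red_char[OF assms(3)] .
  have C: "collapsible G n c \<longleftrightarrow> Cc c" using col_char[OF assms(3)] .
  have bl: "\<And>v. blocked G c v \<longleftrightarrow> Inl v \<in> c \<and> \<not> unblocked G c v" unfolding blocked_def by simp
  have ub: "\<And>v. unblocked G c v \<Longrightarrow> Inl v \<in> c" unfolding unblocked_def by simp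
  show ?thesis
    unfolding critical_def R C Cc_def using assms(3) bl ub by blast
qed


end
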